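(* Let $(T_n)$ be a sequence of tournaments with $|T_n|\to\infty$ such that $c_3=\lim\mathbf{pr}(C_3,T_n)$ and $c_4=\lim\mathbf{pr}(C_4,T_n)$ exist. If $c_3\ge\frac1{16}$ then $c_4\ge\frac3{64}$. In particular, the balanced random blow-up of the transitive tournament $T_2$ (which has $c_3=\frac1{16}$ and $c_4=\frac3{64}$) minimizes $c_4$ among all such sequences with $c_3=\frac1{16}$.
   Context: For tournaments $T,H$, $\mathbf{pr}(H,T)$ denotes the probability that a uniformly random set of $|H|$ vertices of $T$ spans a subtournament isomorphic to $H$. $C_3$ is the cyclically oriented triangle, $C_4$ is the $4$-vertex tournament containing a directed Hamiltonian $4$-cycle, and $T_m$ is the transitive $m$-vertex tournament. The balanced random blow-up of a $k$-vertex tournament $H$ is the sequence whose $n$-th member has vertex set $V_1\sqcup\dots\sqcup V_k$ with $|V_i|=\lfloor n/k\rfloor$, all edges directed from $V_i$ to $V_j$ whenever $i\to j$ in $H$, and a uniformly random tournament on each $V_i$ (limits taken almost surely). *)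

theory Defs
  imports Complex_Main
begin

definition tournament :: "nat \<Rightarrow> (nat \<Rightarrow> nat \<Rightarrow> bool) \<Rightarrow> bool" where
  "tournament n T \<longleftrightarrow>
     (\<forall>u<n. \<not> T u u) \<and>
     (\<forall>u<n. \<forall>v<n. u \<noteq> v \<longrightarrow> (T u v \<longleftrightarrow> \<not> T v u))"

definition spans_iso :: "nat \<Rightarrow> (nat \<Rightarrow> nat \<Rightarrow> bool) \<Rightarrow> (nat \<Rightarrow> nat \<Rightarrow> bool) \<Rightarrow> nat set \<Rightarrow> bool" where
  "spans_iso k H T S \<longleftrightarrow>
     (\<exists>f. bij_betw f {0..<k} S \<and> (\<forall>i<k. \<forall>j<k. H i j \<longleftrightarrow> T (f i) (f j)))"

definition pr :: "nat \<Rightarrow> (nat \<Rightarrow> nat \<Rightarrow> bool) \<Rightarrow> nat \<Rightarrow> (nat \<Rightarrow> nat \<Rightarrow> bool) \<Rightarrow> real" where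
  "pr k H n T =
     real (card {S. S \<subseteq> {0..<n} \<and> card S = k \<and> spans_iso k H T S}) / real (n choose k)"

definition C3 :: "nat \<Rightarrow> nat \<Rightarrow> bool" where
  "C3 i j \<longleftrightarrow> i < 3 \<and> j < 3 \<and> j = (i + 1) mod 3"

text \<open>The 4-vertex tournament with a directed Hamiltonian cycle 0 -> 1 -> 2 -> 3 -> 0
  (unique up to isomorphism), with diagonals 0 -> 2 and 1 -> 3.\<close>
definition C4 :: "nat \<Rightarrow> nat \<Rightarrow> bool" where
  "C4 i j \<longleftrightarrow> (i, j) \<in> {(0,1), (1,2), (2,3), (3,0), (0,2), (1,3)}"

end

theory Submission
  imports Defs "HOL-Combinatorics.Multiset_Permutations"
begin


definition S4 :: "nat \<Rightarrow> (nat \<Rightarrow> nat \<Rightarrow> nat \<Rightarrow> nat \<Rightarrow> real) \<Rightarrow> real" where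
  "S4 n f = (\<Sum>p<n. \<Sum>q<n. \<Sum>r<n. \<Sum>s<n. f p q r s)"

definition S3 :: "nat \<Rightarrow> (nat \<Rightarrow> nat \<Rightarrow> nat \<Rightarrow> real) \<Rightarrow> real" where
  "S3 n f = (\<Sum>p<n. \<Sum>q<n. \<Sum>r<n. f p q r)"

lemma S4_prod: "S4 n f = (\<Sum>(p,q,r,s)\<in>{..<n}\<times>{..<n}\<times>{..<n}\<times>{..<n}. f p q r s)"
  unfolding S4_def by (simp add: sum.cartesian_product)

lemma S3_prod: "S3 n f = (\<Sum>(p,q,r)\<in>{..<n}\<times>{..<n}\<times>{..<n}. f p q r)"
  unfolding S3_def by (simp add: sum.cartesian_product)

lemma S4_t12: "S4 n f = S4 n (\<lambda>p q r s. f q p r s)"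
  unfolding S4_prod
  by (rule sum.reindex_bij_witness[where i="\<lambda>(p,q,r,s). (q,p,r,s)" and j="\<lambda>(p,q,r,s). (q,p,r,s)"]) auto
lemma S4_t13: "S4 n f = S4 n (\<lambda>p q r s. f r q p s)"
  unfolding S4_prod
  by (rule sum.reindex_bij_witness[where i="\<lambda>(p,q,r,s). (r,q,p,s)" and j="\<lambda>(p,q,r,s). (r,q,p,s)"]) auto
lemma S4_t14: "S4 n f = S4 n (\<lambda>p q r s. f s q r p)"
  unfolding S4_prod
  by (rule sum.reindex_bij_witness[where i="\<lambda>(p,q,r,s). (s,q,r,p)" and j="\<lambda>(p,q,r,s). (s,q,r,p)"]) auto
lemma S4_t23: "S4 n f = S4 n (\<lambda>p q r s. f p r q s)"
  unfolding S4_prod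
  by (rule sum.reindex_bij_witness[where i="\<lambda>(p,q,r,s). (p,r,q,s)" and j="\<lambda>(p,q,r,s). (p,r,q,s)"]) auto
lemma S4_t24: "S4 n f = S4 n (\<lambda>p q r s. f p s r q)"
  unfolding S4_prod
  by (rule sum.reindex_bij_witness[where i="\<lambda>(p,q,r,s). (p,s,r,q)" and j="\<lambda>(p,q,r,s). (p,s,r,q)"]) auto
lemma S4_t34: "S4 n f = S4 n (\<lambda>p q r s. f p q s r)"
  unfolding S4_prod
  by (rule sum.reindex_bij_witness[where i="\<lambda>(p,q,r,s). (p,q,s,r)" and j="\<lambda>(p,q,r,s). (p,q,s,r)"]) auto

lemma S4_add: "S4 n (\<lambda>p q r s. f p q r s + g p q r s) = S4 n f + S4 n g"
  unfolding S4_def by (simp add: sum.distrib)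
lemma S4_diff: "S4 n (\<lambda>p q r s. f p q r s - g p q r s) = S4 n f - S4 n g"
  unfolding S4_def by (simp add: sum_subtractf)
lemma S4_cmult: "S4 n (\<lambda>p q r s. c * f p q r s) = c * S4 n f"
  unfolding S4_def by (simp add: sum_distrib_left)
lemma S4_cong: "(\<And>p q r s. p<n \<Longrightarrow> q<n \<Longrightarrow> r<n \<Longrightarrow> s<n \<Longrightarrow> f p q r s = g p q r s) \<Longrightarrow> S4 n f = S4 n g"
  unfolding S4_def by (intro sum.cong) auto

lemma list4: "length xs = 4 \<Longrightarrow> xs = [xs!0, xs!1, xs!2, xs!3]"
  by (cases xs; cases "tl xs"; cases "tl (tl xs)"; cases "tl (tl (tl xs))") auto
lemma list3: "length xs = 3 \<Longrightarrow> xs = [xs!0, xs!1, xs!2]"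
  by (cases xs; cases "tl xs"; cases "tl (tl xs)") auto

lemma S4_count:
  "S4 n (\<lambda>p q r s. if P p q r s then 1 else 0) =
   real (card {xs. length xs = 4 \<and> set xs \<subseteq> {..<n} \<and> P (xs!0) (xs!1) (xs!2) (xs!3)})"
proof -
  let ?A = "{t \<in> {..<n}\<times>{..<n}\<times>{..<n}\<times>{..<n}. (case t of (p,q,r,s) \<Rightarrow> P p q r s)}"
  have "S4 n (\<lambda>p q r s. if P p q r s then 1 else 0) = real (card ?A)"
    unfolding S4_prod by (simp add: sum.If_cases case_prod_beta Int_def)
  also have "card ?A = card {xs. length xs = 4 \<and> set xs \<subseteq> {..<n} \<and> P (xs!0) (xs!1) (xs!2) (xs!3)}"
  proof (rule bij_betw_same_card[where f="\<lambda>(p,q,r,s). [p,q,r,s]"])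
    show "bij_betw (\<lambda>(p,q,r,s). [p,q,r,s]) ?A {xs. length xs = 4 \<and> set xs \<subseteq> {..<n} \<and> P (xs!0) (xs!1) (xs!2) (xs!3)}"
    proof (rule bij_betwI[where g="\<lambda>xs. (xs!0, xs!1, xs!2, xs!3)"])
      show "(\<lambda>(p,q,r,s). [p,q,r,s]) \<in> ?A \<rightarrow> {xs. length xs = 4 \<and> set xs \<subseteq> {..<n} \<and> P (xs!0) (xs!1) (xs!2) (xs!3)}" by auto
      show "(\<lambda>xs. (xs!0, xs!1, xs!2, xs!3)) \<in> {xs. length xs = 4 \<and> set xs \<subseteq> {..<n} \<and> P (xs!0) (xs!1) (xs!2) (xs!3)} \<rightarrow> ?A"
        by (auto simp: subset_iff)
      show "\<And>x. x \<in> ?A \<Longrightarrow> (\<lambda>xs. (xs!0, xs!1, xs!2, xs!3)) ((\<lambda>(p,q,r,s). [p,q,r,s]) x) = x" by auto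
      show "\<And>y. y \<in> {xs. length xs = 4 \<and> set xs \<subseteq> {..<n} \<and> P (xs!0) (xs!1) (xs!2) (xs!3)} \<Longrightarrow> (\<lambda>(p,q,r,s). [p,q,r,s]) ((\<lambda>xs. (xs!0, xs!1, xs!2, xs!3)) y) = y"
        by clarify (metis list4)
    qed
  qed
  finally show ?thesis .
qed

definition cyc :: "(nat \<Rightarrow> nat \<Rightarrow> bool) \<Rightarrow> nat \<Rightarrow> nat \<Rightarrow> nat \<Rightarrow> bool" where
  "cyc T x y z \<longleftrightarrow> (T x y \<and> T y z \<and> T z x) \<or> (T y x \<and> T z y \<and> T x z)"

definition lw :: "(nat \<Rightarrow> nat \<Rightarrow> bool) \<Rightarrow> nat \<Rightarrow> nat \<Rightarrow> nat \<Rightarrow> real" where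
  "lw T u v w = (if T w u \<and> T w v then 1 else if T u w \<and> T v w then 1
      else if T u w \<and> T w v then -1 else -5)"

definition D4 :: "nat \<Rightarrow> nat \<Rightarrow> nat \<Rightarrow> nat \<Rightarrow> bool" where
  "D4 p q r s \<longleftrightarrow> p \<noteq> q \<and> p \<noteq> r \<and> p \<noteq> s \<and> q \<noteq> r \<and> q \<noteq> s \<and> r \<noteq> s"

definition FF :: "(nat \<Rightarrow> nat \<Rightarrow> bool) \<Rightarrow> nat \<Rightarrow> nat \<Rightarrow> nat \<Rightarrow> nat \<Rightarrow> real" where
  "FF T p q r s = (if D4 p q r s \<and> T p q then lw T p q r * lw T p q s else 0)"

definition G1 where "G1 T p q r s = FF T p q r s + FF T q p r s"
definition G2 where "G2 T p q r s = G1 T p q r s + G1 T r q p s + G1 T p r q s"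
definition G3 where "G3 T p q r s = G2 T p q r s + G2 T s q r p + G2 T p s r q + G2 T p q s r"

definition cnt :: "(nat \<Rightarrow> nat \<Rightarrow> bool) \<Rightarrow> nat \<Rightarrow> nat \<Rightarrow> nat \<Rightarrow> nat \<Rightarrow> real" where
  "cnt T p q r s = of_bool (cyc T p q r) + of_bool (cyc T p q s) + of_bool (cyc T p r s) + of_bool (cyc T q r s)"


definition lwb :: "bool \<Rightarrow> bool \<Rightarrow> real" where
  "lwb x y = (if x = y then 1 else if x then -1 else -5)"
definition ffb :: "bool \<Rightarrow> bool \<Rightarrow> bool \<Rightarrow> bool \<Rightarrow> bool \<Rightarrow> real" where
  "ffb a b c d e = (if a then lwb b c * lwb d e else 0)"
definition cycb :: "bool \<Rightarrow> bool \<Rightarrow> bool \<Rightarrow> bool" where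
  "cycb a b c = ((a \<and> c \<and> \<not> b) \<or> (\<not> a \<and> \<not> c \<and> b))"

lemma FF_eq: "D4 x y z w \<Longrightarrow> (T z x \<longleftrightarrow> \<not> T x z) \<Longrightarrow> (T z y \<longleftrightarrow> \<not> T y z) \<Longrightarrow>
  (T w x \<longleftrightarrow> \<not> T x w) \<Longrightarrow> (T w y \<longleftrightarrow> \<not> T y w) \<Longrightarrow>
  FF T x y z w = ffb (T x y) (T x z) (T y z) (T x w) (T y w)"
  unfolding FF_def ffb_def lw_def lwb_def by auto

lemma cyc_eq: "(T y x \<longleftrightarrow> \<not> T x y) \<Longrightarrow> (T z x \<longleftrightarrow> \<not> T x z) \<Longrightarrow> (T z y \<longleftrightarrow> \<not> T y z) \<Longrightarrow>
  cyc T x y z = cycb (T x y) (T x z) (T y z)"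
  unfolding cyc_def cycb_def by auto

lemma G3_id:
  assumes "D4 p q r s"
    and t: "T q p \<longleftrightarrow> \<not> T p q" "T r p \<longleftrightarrow> \<not> T p r" "T s p \<longleftrightarrow> \<not> T p s"
        "T r q \<longleftrightarrow> \<not> T q r" "T s q \<longleftrightarrow> \<not> T q s" "T s r \<longleftrightarrow> \<not> T r s"
  shows "G3 T p q r s = 128 * of_bool (cnt T p q r s = 2) - 40 * cnt T p q r s + 4"
proof -
  have d: "p \<noteq> q" "p \<noteq> r" "p \<noteq> s" "q \<noteq> r" "q \<noteq> s" "r \<noteq> s"
    using assms(1) unfolding D4_def by auto
  show ?thesis
    unfolding G3_def G2_def G1_def cnt_def
    apply (simp only: FF_eq cyc_eq D4_def d d[symmetric] t not_not simp_thms)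
    by (cases "T p q"; cases "T p r"; cases "T p s"; cases "T q r"; cases "T q s"; cases "T r s";
        simp add: ffb_def lwb_def cycb_def)
qed

lemma FF_nd: "\<not> D4 x y z w \<Longrightarrow> FF T x y z w = 0"
  unfolding FF_def by simp

lemma G3_n:
  assumes tour: "tournament n T" and lt: "p < n" "q < n" "r < n" "s < n"
  shows "G3 T p q r s = (if D4 p q r s then 128 * of_bool (cnt T p q r s = 2) - 40 * cnt T p q r s + 4 else 0)"
proof (cases "D4 p q r s")
  case True
  then have d: "p \<noteq> q" "p \<noteq> r" "p \<noteq> s" "q \<noteq> r" "q \<noteq> s" "r \<noteq> s" unfolding D4_def by auto
  have t: "T q p \<longleftrightarrow> \<not> T p q" "T r p \<longleftrightarrow> \<not> T p r" "T s p \<longleftrightarrow> \<not> T p s"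
        "T r q \<longleftrightarrow> \<not> T q r" "T s q \<longleftrightarrow> \<not> T q s" "T s r \<longleftrightarrow> \<not> T r s"
  proof -
    have h: "\<And>u v. u < n \<Longrightarrow> v < n \<Longrightarrow> u \<noteq> v \<Longrightarrow> T u v \<longleftrightarrow> \<not> T v u"
      using tour unfolding tournament_def by blast
    show "T q p \<longleftrightarrow> \<not> T p q" "T r p \<longleftrightarrow> \<not> T p r" "T s p \<longleftrightarrow> \<not> T p s"
        "T r q \<longleftrightarrow> \<not> T q r" "T s q \<longleftrightarrow> \<not> T q s" "T s r \<longleftrightarrow> \<not> T r s"
      using h lt d by metis+
  qed
  show ?thesis using G3_id[OF True t] True by simp
next
  case False
  then have "p = q \<or> p = r \<or> p = s \<or> q = r \<or> q = s \<or> r = s" unfolding D4_def by blast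
  then show ?thesis
    by (elim disjE; simp add: G3_def G2_def G1_def FF_nd D4_def)
qed

lemma S4_G3: "S4 n (G3 T) = 24 * S4 n (FF T)"
proof -
  have 1: "S4 n (G1 T) = 2 * S4 n (FF T)"
  proof -
    have "S4 n (G1 T) = S4 n (FF T) + S4 n (\<lambda>p q r s. FF T q p r s)"
      unfolding G1_def[abs_def] by (rule S4_add)
    then show ?thesis using S4_t12[of n "FF T"] by simp
  qed
  have 2: "S4 n (G2 T) = 6 * S4 n (FF T)"
  proof -
    have "S4 n (G2 T) = S4 n (G1 T) + S4 n (\<lambda>p q r s. G1 T r q p s) + S4 n (\<lambda>p q r s. G1 T p r q s)"
      unfolding G2_def[abs_def] by (simp only: S4_add)
    then show ?thesis using S4_t13[of n "G1 T"] S4_t23[of n "G1 T"] 1 by simp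
  qed
  have "S4 n (G3 T) = S4 n (G2 T) + S4 n (\<lambda>p q r s. G2 T s q r p) + S4 n (\<lambda>p q r s. G2 T p s r q)
       + S4 n (\<lambda>p q r s. G2 T p q s r)"
    unfolding G3_def[abs_def] by (simp only: S4_add)
  then show ?thesis using S4_t14[of n "G2 T"] S4_t24[of n "G2 T"] S4_t34[of n "G2 T"] 2 by simp
qed

lemma sq_sum_expand:
  fixes a :: "nat \<Rightarrow> real"
  shows "(\<Sum>r<n. a r)^2 = (\<Sum>r<n. a r ^ 2) + (\<Sum>r<n. \<Sum>s<n. if r \<noteq> s then a r * a s else 0)"
proof -
  have "(\<Sum>r<n. a r)^2 = (\<Sum>r<n. \<Sum>s<n. a r * a s)"
    by (simp add: power2_eq_square sum_product)
  also have "\<dots> = (\<Sum>r<n. a r ^ 2 + (\<Sum>s<n. if r \<noteq> s then a r * a s else 0))"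
  proof (rule sum.cong[OF refl])
    fix r assume "r \<in> {..<n}"
    have "(\<Sum>s<n. a r * a s) = (\<Sum>s<n. (if r = s then a r * a s else 0) + (if r \<noteq> s then a r * a s else 0))"
      by (rule sum.cong) auto
    also have "\<dots> = a r ^ 2 + (\<Sum>s<n. if r \<noteq> s then a r * a s else 0)"
      using \<open>r \<in> {..<n}\<close> by (simp add: sum.distrib power2_eq_square)
    finally show "(\<Sum>s<n. a r * a s) = a r ^ 2 + (\<Sum>s<n. if r \<noteq> s then a r * a s else 0)" .
  qed
  also have "\<dots> = (\<Sum>r<n. a r ^ 2) + (\<Sum>r<n. \<Sum>s<n. if r \<noteq> s then a r * a s else 0)"
    by (simp add: sum.distrib)
  finally show ?thesis .
qed

lemma lw_bound: "(lw T u v w)^2 \<le> 25"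
  unfolding lw_def by auto

lemma sos: "S4 n (FF T) \<ge> - 25 * real n ^ 3"
proof -
  have inner: "(\<Sum>r<n. \<Sum>s<n. FF T p q r s) \<ge> - 25 * real n" for p q
  proof (cases "p \<noteq> q \<and> T p q")
    case True
    define a where "a r = (if r \<noteq> p \<and> r \<noteq> q then lw T p q r else 0)" for r
    have "(\<Sum>r<n. \<Sum>s<n. FF T p q r s) = (\<Sum>r<n. \<Sum>s<n. if r \<noteq> s then a r * a s else 0)"
      unfolding FF_def a_def D4_def using True by (intro sum.cong refl) auto
    also have "\<dots> = (\<Sum>r<n. a r)^2 - (\<Sum>r<n. a r ^ 2)"
      using sq_sum_expand[of a n] by simp
    also have "\<dots> \<ge> 0 - (\<Sum>r<n. 25)"
      apply (rule diff_mono)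
       apply simp
      apply (rule sum_mono) unfolding a_def using lw_bound by auto
    finally show ?thesis by simp
  next
    case False
    then show ?thesis unfolding FF_def D4_def by auto
  qed
  have "S4 n (FF T) \<ge> (\<Sum>p<n. \<Sum>q<n. - 25 * real n)"
    unfolding S4_def by (intro sum_mono inner)
  then show ?thesis by (simp add: power3_eq_cube)
qed


definition D3 :: "nat \<Rightarrow> nat \<Rightarrow> nat \<Rightarrow> bool" where
  "D3 p q r \<longleftrightarrow> p \<noteq> q \<and> p \<noteq> r \<and> q \<noteq> r"

lemma S3_count:
  "S3 n (\<lambda>p q r. if P p q r then 1 else 0) =
   real (card {xs. length xs = 3 \<and> set xs \<subseteq> {..<n} \<and> P (xs!0) (xs!1) (xs!2)})"
proof -
  let ?A = "{t \<in> {..<n}\<times>{..<n}\<times>{..<n}. (case t of (p,q,r) \<Rightarrow> P p q r)}"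
  have "S3 n (\<lambda>p q r. if P p q r then 1 else 0) = real (card ?A)"
    unfolding S3_prod by (simp add: sum.If_cases case_prod_beta Int_def)
  also have "card ?A = card {xs. length xs = 3 \<and> set xs \<subseteq> {..<n} \<and> P (xs!0) (xs!1) (xs!2)}"
  proof (rule bij_betw_same_card[where f="\<lambda>(p,q,r). [p,q,r]"])
    show "bij_betw (\<lambda>(p,q,r). [p,q,r]) ?A {xs. length xs = 3 \<and> set xs \<subseteq> {..<n} \<and> P (xs!0) (xs!1) (xs!2)}"
    proof (rule bij_betwI[where g="\<lambda>xs. (xs!0, xs!1, xs!2)"])
      show "(\<lambda>(p,q,r). [p,q,r]) \<in> ?A \<rightarrow> {xs. length xs = 3 \<and> set xs \<subseteq> {..<n} \<and> P (xs!0) (xs!1) (xs!2)}" by auto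
      show "(\<lambda>xs. (xs!0, xs!1, xs!2)) \<in> {xs. length xs = 3 \<and> set xs \<subseteq> {..<n} \<and> P (xs!0) (xs!1) (xs!2)} \<rightarrow> ?A"
        by (auto simp: subset_iff)
      show "\<And>x. x \<in> ?A \<Longrightarrow> (\<lambda>xs. (xs!0, xs!1, xs!2)) ((\<lambda>(p,q,r). [p,q,r]) x) = x" by auto
      show "\<And>y. y \<in> {xs. length xs = 3 \<and> set xs \<subseteq> {..<n} \<and> P (xs!0) (xs!1) (xs!2)} \<Longrightarrow> (\<lambda>(p,q,r). [p,q,r]) ((\<lambda>xs. (xs!0, xs!1, xs!2)) y) = y"
        by clarify (metis list3)
    qed
  qed
  finally show ?thesis .
qed

lemma fam_count:
  assumes "finite V" "A \<subseteq> {S. S \<subseteq> V \<and> card S = k}"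
  shows "card {xs. distinct xs \<and> set xs \<in> A} = fact k * card A"
proof -
  have "A \<subseteq> Pow V" using assms(2) by auto
  then have fA: "finite A" using assms(1) by (simp add: finite_subset)
  have eq: "{xs. distinct xs \<and> set xs \<in> A} = (\<Union>S\<in>A. permutations_of_set S)"
    unfolding permutations_of_set_def by auto
  have "card (\<Union>S\<in>A. permutations_of_set S) = (\<Sum>S\<in>A. card (permutations_of_set S))"
    by (rule card_UN_disjoint[OF fA]) (simp, auto simp: permutations_of_set_def)
  also have "\<dots> = (\<Sum>S\<in>A. fact k)"
  proof (rule sum.cong[OF refl])
    fix S assume "S \<in> A"
    then have "S \<subseteq> V" "card S = k" using assms(2) by auto
    then show "card (permutations_of_set S) = fact k"
      using assms(1) finite_subset by (subst card_permutations_of_set) auto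
  qed
  finally show ?thesis using eq by simp
qed

lemma D4_list: "length xs = 4 \<Longrightarrow> D4 (xs!0) (xs!1) (xs!2) (xs!3) \<longleftrightarrow> distinct xs"
  by (subst (3) list4) (auto simp: D4_def)

lemma D3_list: "length xs = 3 \<Longrightarrow> D3 (xs!0) (xs!1) (xs!2) \<longleftrightarrow> distinct xs"
  by (subst (2) list3) (auto simp: D3_def)

lemma X4_eq: "S4 n (\<lambda>p q r s. if D4 p q r s then 1 else 0) = 24 * real (n choose 4)"
proof -
  have "{xs. length xs = 4 \<and> set xs \<subseteq> {..<n} \<and> D4 (xs!0) (xs!1) (xs!2) (xs!3)}
      = {xs. distinct xs \<and> set xs \<in> {S. S \<subseteq> {..<n} \<and> card S = 4}}"
    using D4_list distinct_card by fastforce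
  moreover have "card {xs. distinct xs \<and> set xs \<in> {S. S \<subseteq> {..<n} \<and> card S = 4}} = fact 4 * (n choose 4)"
    using fam_count[of "{..<n}" "{S. S \<subseteq> {..<n} \<and> card S = 4}" 4] n_subsets[of "{..<n}" 4] by simp
  ultimately show ?thesis using S4_count[of n D4] by (simp add: fact_numeral)
qed

lemma X3_eq: "S3 n (\<lambda>p q r. if D3 p q r then 1 else 0) = 6 * real (n choose 3)"
proof -
  have "{xs. length xs = 3 \<and> set xs \<subseteq> {..<n} \<and> D3 (xs!0) (xs!1) (xs!2)}
      = {xs. distinct xs \<and> set xs \<in> {S. S \<subseteq> {..<n} \<and> card S = 3}}"
    using D3_list distinct_card by fastforce
  moreover have "card {xs. distinct xs \<and> set xs \<in> {S. S \<subseteq> {..<n} \<and> card S = 3}} = fact 3 * (n choose 3)"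
    using fam_count[of "{..<n}" "{S. S \<subseteq> {..<n} \<and> card S = 3}" 3] n_subsets[of "{..<n}" 3] by simp
  ultimately show ?thesis using S3_count[of n D3] by (simp add: fact_numeral)
qed

lemma c_gen:
  "S4 n (\<lambda>p q r s. if D4 p q r s then g p q r else 0) = real (n - 3) * S3 n (\<lambda>p q r. if D3 p q r then g p q r else 0)"
  unfolding S4_def S3_def sum_distrib_left
proof (intro sum.cong refl)
  fix p q r assume lt: "p \<in> {..<n}" "q \<in> {..<n}" "r \<in> {..<n}"
  show "(\<Sum>s<n. if D4 p q r s then g p q r else 0) = real (n - 3) * (if D3 p q r then g p q r else 0)"
  proof (cases "D3 p q r")
    case True
    have "(\<Sum>s<n. if D4 p q r s then g p q r else 0) = (\<Sum>s\<in>{..<n} - {p,q,r}. g p q r)"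
      using True unfolding D4_def D3_def by (intro sum.mono_neutral_cong_right) auto
    also have "card ({..<n} - {p,q,r}) = n - 3"
      using True lt unfolding D3_def by (subst card_Diff_subset) auto
    ultimately show ?thesis using True by simp
  next
    case False
    then show ?thesis unfolding D4_def D3_def by auto
  qed
qed

definition pat :: "(nat \<Rightarrow> nat \<Rightarrow> bool) \<Rightarrow> nat \<Rightarrow> nat \<Rightarrow> nat \<Rightarrow> nat \<Rightarrow> bool" where
  "pat T a b c d \<longleftrightarrow> T a b \<and> T b c \<and> T c d \<and> T d a \<and> T a c \<and> T b d"

lemma all4: "(\<forall>i<(4::nat). P i) \<longleftrightarrow> P 0 \<and> P 1 \<and> P 2 \<and> P 3"
  by (auto simp: less_Suc_eq numeral_eq_Suc)

lemma patspan:
  assumes tour: "tournament n T" and lt: "a < n" "b < n" "c < n" "d < n" and pt: "pat T a b c d"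
  shows "spans_iso 4 C4 T {a,b,c,d}"
proof -
  have h: "\<And>u v. u < n \<Longrightarrow> v < n \<Longrightarrow> u \<noteq> v \<Longrightarrow> T u v \<longleftrightarrow> \<not> T v u"
    and irr: "\<And>u. u < n \<Longrightarrow> \<not> T u u"
    using tour unfolding tournament_def by blast+
  have d: "a \<noteq> b" "a \<noteq> c" "a \<noteq> d" "b \<noteq> c" "b \<noteq> d" "c \<noteq> d"
    using pt irr lt unfolding pat_def by metis+
  have rv: "\<not> T b a" "\<not> T c b" "\<not> T d c" "\<not> T a d" "\<not> T c a" "\<not> T d b"
    using pt h lt d unfolding pat_def by metis+
  have ir: "\<not> T a a" "\<not> T b b" "\<not> T c c" "\<not> T d d" using irr lt by auto
  define f where "f i = (if i = 0 then a else if i = 1 then b else if i = 2 then c else d)" for i :: nat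
  have U: "{0..<4::nat} = {0,1,2,3}" by auto
  have "bij_betw f {0..<4} {a,b,c,d}"
    unfolding bij_betw_def U inj_on_def f_def using d by auto
  moreover have "\<forall>i<4. \<forall>j<4. C4 i j \<longleftrightarrow> T (f i) (f j)"
    unfolding all4 f_def C4_def using pt rv ir unfolding pat_def by simp
  ultimately show ?thesis unfolding spans_iso_def by blast
qed

lemma cnt2_pat:
  assumes d: "p \<noteq> q" "p \<noteq> r" "p \<noteq> s" "q \<noteq> r" "q \<noteq> s" "r \<noteq> s"
    and t: "T q p \<longleftrightarrow> \<not> T p q" "T r p \<longleftrightarrow> \<not> T p r" "T s p \<longleftrightarrow> \<not> T p s"
        "T r q \<longleftrightarrow> \<not> T q r" "T s q \<longleftrightarrow> \<not> T q s" "T s r \<longleftrightarrow> \<not> T r s"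
    and c: "cnt T p q r s = 2"
  shows "pat T p q r s \<or>
    pat T p q s r \<or>
    pat T p r q s \<or>
    pat T p r s q \<or>
    pat T p s q r \<or>
    pat T p s r q \<or>
    pat T q p r s \<or>
    pat T q p s r \<or>
    pat T q r p s \<or>
    pat T q r s p \<or>
    pat T q s p r \<or>
    pat T q s r p \<or>
    pat T r p q s \<or>
    pat T r p s q \<or>
    pat T r q p s \<or>
    pat T r q s p \<or>
    pat T r s p q \<or>
    pat T r s q p \<or>
    pat T s p q r \<or>
    pat T s p r q \<or>
    pat T s q p r \<or>
    pat T s q r p \<or>
    pat T s r p q \<or>
    pat T s r q p"
  using c unfolding cnt_def pat_def
  apply (simp only: cyc_eq t not_not simp_thms)
  by (cases "T p q"; cases "T p r"; cases "T p s"; cases "T q r"; cases "T q s"; cases "T r s";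
        simp add: cycb_def)

lemma K4:
  assumes tour: "tournament n T" and lt: "p < n" "q < n" "r < n" "s < n"
    and dd: "D4 p q r s" and c: "cnt T p q r s = 2"
  shows "spans_iso 4 C4 T {p,q,r,s}"
proof -
  have d: "p \<noteq> q" "p \<noteq> r" "p \<noteq> s" "q \<noteq> r" "q \<noteq> s" "r \<noteq> s" using dd unfolding D4_def by auto
  have h: "\<And>u v. u < n \<Longrightarrow> v < n \<Longrightarrow> u \<noteq> v \<Longrightarrow> T u v \<longleftrightarrow> \<not> T v u"
    using tour unfolding tournament_def by blast
  have t: "T q p \<longleftrightarrow> \<not> T p q" "T r p \<longleftrightarrow> \<not> T p r" "T s p \<longleftrightarrow> \<not> T p s"
        "T r q \<longleftrightarrow> \<not> T q r" "T s q \<longleftrightarrow> \<not> T q s" "T s r \<longleftrightarrow> \<not> T r s"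
    using h lt d by metis+
  have P: "\<And>a b c d. pat T a b c d \<Longrightarrow> {a,b,c,d} = {p,q,r,s} \<Longrightarrow> spans_iso 4 C4 T {p,q,r,s}"
  proof -
    fix a b c d assume pt: "pat T a b c d" and eq: "{a,b,c,d} = {p,q,r,s}"
    then have "a \<in> {p,q,r,s}" "b \<in> {p,q,r,s}" "c \<in> {p,q,r,s}" "d \<in> {p,q,r,s}" by blast+
    then have "a < n" "b < n" "c < n" "d < n" using lt by auto
    from patspan[OF tour this pt] eq show "spans_iso 4 C4 T {p,q,r,s}" by simp
  qed
  from cnt2_pat[OF d t c] show ?thesis
    apply (elim disjE)
    apply (erule P, blast)+
    done
qed


lemma K3:
  assumes sp: "spans_iso 3 C3 T {a,b,c}" and d: "a \<noteq> b" "a \<noteq> c" "b \<noteq> c"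
  shows "cyc T a b c"
proof -
  obtain f where bij: "bij_betw f {0..<3} {a,b,c}" and H: "\<forall>i<3. \<forall>j<3. C3 i j \<longleftrightarrow> T (f i) (f j)"
    using sp unfolding spans_iso_def by blast
  have t: "T (f 0) (f 1)" "T (f 1) (f 2)" "T (f 2) (f 0)"
    using H[rule_format, of 0 1] H[rule_format, of 1 2] H[rule_format, of 2 0] unfolding C3_def by auto
  have U: "{0..<3::nat} = {0,1,2}" by auto
  have im: "{f 0, f 1, f 2} = {a,b,c}" using bij unfolding bij_betw_def U by simp
  then have "a \<in> {f 0, f 1, f 2}" "b \<in> {f 0, f 1, f 2}" "c \<in> {f 0, f 1, f 2}" by blast+
  then show ?thesis using t d unfolding cyc_def by auto
qed

lemma span3_bound:
  "6 * real (card {S. S \<subseteq> {0..<n} \<and> card S = 3 \<and> spans_iso 3 C3 T S})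
     \<le> S3 n (\<lambda>p q r. if D3 p q r then of_bool (cyc T p q r) else 0)"
proof -
  let ?A = "{S. S \<subseteq> {0..<n} \<and> card S = 3 \<and> spans_iso 3 C3 T S}"
  let ?L = "{xs. length xs = 3 \<and> set xs \<subseteq> {..<n} \<and> (D3 (xs!0) (xs!1) (xs!2) \<and> cyc T (xs!0) (xs!1) (xs!2))}"
  have "card {xs. distinct xs \<and> set xs \<in> ?A} = fact 3 * card ?A"
    by (rule fam_count[of "{0..<n}"]) auto
  moreover have "card {xs. distinct xs \<and> set xs \<in> ?A} \<le> card ?L"
  proof (rule card_mono)
    show "finite ?L"
      by (rule finite_subset[OF _ finite_lists_length_eq[of "{..<n}" 3]]) auto
    show "{xs. distinct xs \<and> set xs \<in> ?A} \<subseteq> ?L"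
    proof
      fix xs assume "xs \<in> {xs. distinct xs \<and> set xs \<in> ?A}"
      then have dx: "distinct xs" and sx: "set xs \<subseteq> {0..<n}" "card (set xs) = 3" "spans_iso 3 C3 T (set xs)" by auto
      have l3: "length xs = 3" using dx sx distinct_card by metis
      then have xe: "xs = [xs!0, xs!1, xs!2]" by (rule list3)
      have D: "D3 (xs!0) (xs!1) (xs!2)" using D3_list l3 dx by blast
      have "spans_iso 3 C3 T {xs!0, xs!1, xs!2}" using sx(3) xe by (metis list.set(1) list.set(2))
      then have "cyc T (xs!0) (xs!1) (xs!2)" using D unfolding D3_def by (intro K3) auto
      then show "xs \<in> ?L" using l3 sx D by auto
    qed
  qed
  moreover have "S3 n (\<lambda>p q r. if D3 p q r then of_bool (cyc T p q r) else 0) = real (card ?L)"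
  proof -
    have "S3 n (\<lambda>p q r. if D3 p q r then of_bool (cyc T p q r) else 0)
        = S3 n (\<lambda>p q r. if D3 p q r \<and> cyc T p q r then 1 else 0)"
      unfolding S3_def by (intro sum.cong refl) auto
    then show ?thesis using S3_count[of n "\<lambda>p q r. D3 p q r \<and> cyc T p q r"] by simp
  qed
  ultimately show ?thesis by (simp add: fact_numeral)
qed

lemma span4_bound:
  assumes tour: "tournament n T"
  shows "S4 n (\<lambda>p q r s. if D4 p q r s then of_bool (cnt T p q r s = 2) else 0)
     \<le> 24 * real (card {S. S \<subseteq> {0..<n} \<and> card S = 4 \<and> spans_iso 4 C4 T S})"
proof -
  let ?A = "{S. S \<subseteq> {0..<n} \<and> card S = 4 \<and> spans_iso 4 C4 T S}"
  let ?L = "{xs. length xs = 4 \<and> set xs \<subseteq> {..<n} \<and> (D4 (xs!0) (xs!1) (xs!2) (xs!3) \<and> cnt T (xs!0) (xs!1) (xs!2) (xs!3) = 2)}"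
  have "card {xs. distinct xs \<and> set xs \<in> ?A} = fact 4 * card ?A"
    by (rule fam_count[of "{0..<n}"]) auto
  moreover have "card ?L \<le> card {xs. distinct xs \<and> set xs \<in> ?A}"
  proof (rule card_mono)
    show "finite {xs. distinct xs \<and> set xs \<in> ?A}"
      by (rule finite_subset[OF _ finite_lists_length_eq[of "{..<n}" 4]]) (auto simp: distinct_card)
    show "?L \<subseteq> {xs. distinct xs \<and> set xs \<in> ?A}"
    proof
      fix xs assume "xs \<in> ?L"
      then have l4: "length xs = 4" and sx: "set xs \<subseteq> {..<n}" and D: "D4 (xs!0) (xs!1) (xs!2) (xs!3)"
        and c: "cnt T (xs!0) (xs!1) (xs!2) (xs!3) = 2" by auto
      have xe: "xs = [xs!0, xs!1, xs!2, xs!3]" using l4 by (rule list4)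
      have dx: "distinct xs" using D4_list l4 D by blast
      have lt0: "\<And>i. i < 4 \<Longrightarrow> xs!i < n" using sx l4 by (metis lessThan_iff nth_mem subsetD)
      have lt: "xs!0 < n" "xs!1 < n" "xs!2 < n" "xs!3 < n" using lt0 by auto
      have "spans_iso 4 C4 T {xs!0, xs!1, xs!2, xs!3}" by (rule K4[OF tour lt D c])
      then have "spans_iso 4 C4 T (set xs)" using xe by (metis list.set(1) list.set(2))
      moreover have "card (set xs) = 4" using dx l4 distinct_card by metis
      ultimately show "xs \<in> {xs. distinct xs \<and> set xs \<in> ?A}" using dx sx by auto
    qed
  qed
  moreover have "S4 n (\<lambda>p q r s. if D4 p q r s then of_bool (cnt T p q r s = 2) else 0) = real (card ?L)"
  proof -
    have "S4 n (\<lambda>p q r s. if D4 p q r s then of_bool (cnt T p q r s = 2) else 0)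
        = S4 n (\<lambda>p q r s. if D4 p q r s \<and> cnt T p q r s = 2 then 1 else 0)"
      by (intro S4_cong) auto
    then show ?thesis using S4_count[of n "\<lambda>p q r s. D4 p q r s \<and> cnt T p q r s = 2"] by simp
  qed
  ultimately show ?thesis by (simp add: fact_numeral)
qed

lemma cyc_sym: "cyc T p r q = cyc T p q r" "cyc T q r p = cyc T p q r" "cyc T q p r = cyc T p q r"
  "cyc T r p q = cyc T p q r" "cyc T r q p = cyc T p q r"
  unfolding cyc_def by auto

lemma cnt_sum:
  "S4 n (\<lambda>p q r s. if D4 p q r s then cnt T p q r s else 0)
    = 4 * real (n - 3) * S3 n (\<lambda>p q r. if D3 p q r then of_bool (cyc T p q r) else 0)"
proof -
  define h where "h p q r s = (if D4 p q r s then of_bool (cyc T p q r) else (0::real))" for p q r s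
  have "S4 n (\<lambda>p q r s. if D4 p q r s then cnt T p q r s else 0)
     = S4 n (\<lambda>p q r s. h p q r s + (if D4 p q r s then of_bool (cyc T p q s) else 0)
          + (if D4 p q r s then of_bool (cyc T p r s) else 0) + (if D4 p q r s then of_bool (cyc T q r s) else 0))"
    unfolding h_def cnt_def by (intro S4_cong) auto
  also have "\<dots> = S4 n h + S4 n (\<lambda>p q r s. if D4 p q r s then of_bool (cyc T p q s) else 0)
      + S4 n (\<lambda>p q r s. if D4 p q r s then of_bool (cyc T p r s) else 0)
      + S4 n (\<lambda>p q r s. if D4 p q r s then of_bool (cyc T q r s) else 0)"
    by (simp only: S4_add)
  also have "S4 n (\<lambda>p q r s. if D4 p q r s then of_bool (cyc T p q s) else 0) = S4 n h"
    apply (subst S4_t34) unfolding h_def by (intro S4_cong) (auto simp: D4_def)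
  also have "S4 n (\<lambda>p q r s. if D4 p q r s then of_bool (cyc T p r s) else 0) = S4 n h"
    apply (subst S4_t24) unfolding h_def by (intro S4_cong) (auto simp: D4_def cyc_sym)
  also have "S4 n (\<lambda>p q r s. if D4 p q r s then of_bool (cyc T q r s) else 0) = S4 n h"
    apply (subst S4_t14) unfolding h_def by (intro S4_cong) (auto simp: D4_def cyc_sym)
  also have "S4 n h = real (n - 3) * S3 n (\<lambda>p q r. if D3 p q r then of_bool (cyc T p q r) else 0)"
    unfolding h_def by (rule c_gen)
  finally show ?thesis by simp
qed


lemma B4_eq: "4 \<le> n \<Longrightarrow> 24 * real (n choose 4) = real n * (real n - 1) * (real n - 2) * (real n - 3)"
proof -
  assume n4: "4 \<le> n"
  have f1: "fact n = n * (fact (n - 1) :: nat)" using n4 fact_reduce[where 'a=nat, of n] by (simp add: eval_nat_numeral)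
  have f2: "fact (n - 1) = (n - 1) * (fact (n - 2) :: nat)" using n4 fact_reduce[where 'a=nat, of "n - 1"] by (simp add: eval_nat_numeral)
  have f3: "fact (n - 2) = (n - 2) * (fact (n - 3) :: nat)" using n4 fact_reduce[where 'a=nat, of "n - 2"] by (simp add: eval_nat_numeral)
  have f4: "fact (n - 3) = (n - 3) * (fact (n - 4) :: nat)" using n4 fact_reduce[where 'a=nat, of "n - 3"] by (simp add: eval_nat_numeral)
  have "fact 4 * fact (n - 4) * (n choose 4) = fact n" using n4 by (rule binomial_fact_lemma)
  then have e: "(24 * (n choose 4)) * fact (n - 4) = (n * (n - 1) * (n - 2) * (n - 3)) * (fact (n - 4) :: nat)"
    unfolding f1 f2 f3 f4 by (simp add: fact_numeral mult_ac)
  have "24 * (n choose 4) = n * (n - 1) * (n - 2) * (n - 3)"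
    using e by (metis fact_nonzero mult_right_cancel)
  then have "real (24 * (n choose 4)) = real (n * (n - 1) * (n - 2) * (n - 3))" by simp
  then show ?thesis using n4 by (simp add: of_nat_diff)
qed

lemma B4_lower: "6 \<le> n \<Longrightarrow> real n ^ 4 / 16 \<le> 24 * real (n choose 4)"
proof -
  assume n6: "6 \<le> n"
  define x where "x = real n"
  have x6: "x \<ge> 6" using n6 unfolding x_def by simp
  have "(x/2) * (x/2) * (x/2) * (x/2) \<le> x * (x - 1) * (x - 2) * (x - 3)"
    using x6 by (intro mult_mono) auto
  then show ?thesis using B4_eq[of n] n6 unfolding x_def[symmetric] by (simp add: power4_eq_xxxx)
qed

lemma main_n:
  assumes tour: "tournament n T" and n6: "6 \<le> n"
  shows "160 * pr 3 C3 n T - 4 - 9600 / real n \<le> 128 * pr 4 C4 n T"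
proof -
  define A4 where "A4 = real (card {S. S \<subseteq> {0..<n} \<and> card S = 4 \<and> spans_iso 4 C4 T S})"
  define A3 where "A3 = real (card {S. S \<subseteq> {0..<n} \<and> card S = 3 \<and> spans_iso 3 C3 T S})"
  define B4 where "B4 = real (n choose 4)"
  define B3 where "B3 = real (n choose 3)"
  define Y where "Y = S3 n (\<lambda>p q r. if D3 p q r then of_bool (cyc T p q r) else 0)"
  define Z where "Z = S4 n (\<lambda>p q r s. if D4 p q r s then of_bool (cnt T p q r s = 2) else 0)"
  define W where "W = S4 n (\<lambda>p q r s. if D4 p q r s then cnt T p q r s else 0)"
  define X4 where "X4 = S4 n (\<lambda>p q r s. if D4 p q r s then 1 else 0)"
  define X3 where "X3 = S3 n (\<lambda>p q r. if D3 p q r then 1 else 0)"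
  define k where "k = real (n - 3)"
  have k: "k = real n - 3" "k \<ge> 3" using n6 unfolding k_def by auto
  have "S4 n (G3 T) = S4 n (\<lambda>p q r s. 128 * (if D4 p q r s then of_bool (cnt T p q r s = 2) else 0)
      - 40 * (if D4 p q r s then cnt T p q r s else 0) + 4 * (if D4 p q r s then 1 else 0))"
    by (intro S4_cong) (simp add: G3_n[OF tour])
  also have "\<dots> = 128 * Z - 40 * W + 4 * X4"
    unfolding Z_def W_def X4_def by (simp only: S4_add S4_diff S4_cmult)
  finally have e1: "24 * S4 n (FF T) = 128 * Z - 40 * W + 4 * X4" using S4_G3 by simp
  have F: "S4 n (FF T) \<ge> - 25 * real n ^ 3" by (rule sos)
  have Wk: "W = 4 * k * Y" unfolding W_def Y_def k_def by (rule cnt_sum)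
  have X4: "X4 = 24 * B4" unfolding X4_def B4_def by (rule X4_eq)
  have X3: "X3 = 6 * B3" unfolding X3_def B3_def by (rule X3_eq)
  have X43: "X4 = k * X3" unfolding X4_def X3_def k_def by (rule c_gen)
  have ZA: "Z \<le> 24 * A4" unfolding Z_def A4_def by (rule span4_bound[OF tour])
  have YA: "6 * A3 \<le> Y" unfolding Y_def A3_def by (rule span3_bound)
  have B4l: "real n ^ 4 / 16 \<le> 24 * B4" unfolding B4_def by (rule B4_lower[OF n6])
  have npos: "real n > 0" using n6 by simp
  have "real n ^ 4 / 16 > 0" using npos by simp
  then have B4pos: "B4 > 0" using B4l by linarith
  have "24 * B4 = 6 * (k * B3)" using X4 X3 X43 by (simp add: mult_ac)
  then have kB3: "k * B3 = 4 * B4" by linarith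
  have "B3 = (k * B3) / k" using k by simp
  then have B3eq: "B3 = 4 * B4 / k" using kB3 by simp
  have "k * Y \<ge> k * (6 * A3)" using YA k by (intro mult_left_mono) auto
  then have kY: "k * Y \<ge> 6 * (k * A3)" by (simp add: mult_ac)
  have e2: "24 * S4 n (FF T) = 128 * Z - 160 * (k * Y) + 96 * B4" using e1 unfolding Wk X4 by (simp add: algebra_simps)
  have h0: "128 * A4 \<ge> 40 * (k * A3) - 4 * B4 - 25 * real n ^ 3"
    using e2 F ZA kY by linarith
  have h: "128 * A4 \<ge> 40 * k * A3 - 4 * B4 - 25 * real n ^ 3"
    using h0 by (simp add: mult.assoc)
  have err: "25 * real n ^ 3 \<le> 9600 * B4 / real n"
  proof -
    have "25 * real n ^ 3 * real n \<le> 9600 * B4" using B4l by (simp add: power4_eq_xxxx power3_eq_cube algebra_simps)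
    then show ?thesis using npos by (simp add: field_simps power_Suc)
  qed
  have p4: "pr 4 C4 n T = A4 / B4" unfolding pr_def A4_def B4_def by simp
  have p3: "pr 3 C3 n T = k * A3 / (4 * B4)" unfolding pr_def A3_def B3eq[unfolded B3_def]
    using k B4pos by (simp add: field_simps)
  have "160 * (k * A3 / (4 * B4)) - 4 - 9600 / real n \<le> 128 * (A4 / B4)"
  proof -
    have "160 * (k * A3 / (4 * B4)) - 4 - 9600 / real n = 40 * k * A3 / B4 - 4 - (9600 * B4 / real n) / B4"
      using B4pos npos by (simp add: field_simps)
    also have "40 * k * A3 / B4 - 4 - (9600 * B4 / real n) / B4 \<le> 128 * (A4 / B4)"
    proof -
      have "40 * k * A3 - 4 * B4 - 9600 * B4 / real n \<le> 128 * A4" using h err by linarith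
      then have "(40 * k * A3 - 4 * B4 - 9600 * B4 / real n) / B4 \<le> 128 * A4 / B4"
        using B4pos by (intro divide_right_mono) auto
      then show ?thesis using B4pos by (simp add: diff_divide_distrib)
    qed
    finally show ?thesis .
  qed
  then show ?thesis using p4 p3 by simp
qed


theorem corollary2p6:
  fixes N :: "nat \<Rightarrow> nat" and T :: "nat \<Rightarrow> nat \<Rightarrow> nat \<Rightarrow> bool"
    and c3 c4 :: real
  assumes tour: "\<And>m. tournament (N m) (T m)"
    and size: "filterlim N at_top sequentially"
    and lim3: "(\<lambda>m. pr 3 C3 (N m) (T m)) \<longlonglongrightarrow> c3"
    and lim4: "(\<lambda>m. pr 4 C4 (N m) (T m)) \<longlonglongrightarrow> c4"
    and c3_ge: "c3 \<ge> 1 / 16"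
  shows "c4 \<ge> 3 / 64"
proof -
  have ev: "eventually (\<lambda>m. 6 \<le> N m) sequentially" using size by (simp add: filterlim_at_top)
  have lim0: "(\<lambda>m. 9600 / real (N m)) \<longlonglongrightarrow> 0"
    by (rule tendsto_divide_0[OF tendsto_const])
       (use filterlim_compose[OF filterlim_real_sequentially size] filterlim_at_top_imp_at_infinity in blast)
  have L: "(\<lambda>m. 128 * pr 4 C4 (N m) (T m) - (160 * pr 3 C3 (N m) (T m) - 4 - 9600 / real (N m)))
      \<longlonglongrightarrow> 128 * c4 - (160 * c3 - 4 - 0)"
    by (intro tendsto_intros lim3 lim4 lim0)
  have "eventually (\<lambda>m. 0 \<le> 128 * pr 4 C4 (N m) (T m) - (160 * pr 3 C3 (N m) (T m) - 4 - 9600 / real (N m))) sequentially"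
    using ev
  proof eventually_elim
    case (elim m)
    show ?case using main_n[OF tour elim] by simp
  qed
  then have "0 \<le> 128 * c4 - (160 * c3 - 4 - 0)"
    by (rule tendsto_lowerbound[OF L]) simp
  then show ?thesis using c3_ge by linarith
qed

end
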